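(* Let $F:X\to [0,\infty]$ be measurable, and such that $\mathrm{zer}F:=\{z\in X\mid F(z)=0\}$ is a closed non-empty set. Further, let $\phi:X\times X\to [0,\infty)$ be a Carath\'eodory distance. Let $(\mathsf{F}_n)$ be a filtration and let $(x_n)$ be an $X$-valued stochastic process adapted to $(\mathsf{F}_n)$ such that: (1) $(x_n)$ is stochastically $\phi$-quasi-Fej\'er monotone w.r.t.\ $\mathrm{zer}F$ and $(\mathsf{F}_n)$ with error sequences $(\zeta_n),(\xi_n)\in\ell^1_+(\mathsf{F}_n)$, i.e.\ $\mathbb{E}[\phi(z,x_{n+1})\mid\mathsf{F}_n]\leq (1+\zeta_n)\phi(z,x_n)+\xi_n$ a.s.\ for all $n\in\mathbb{N}$ and all $z\in\mathrm{zer}F$, where $K>0$ is a uniform almost-sure bound for $\prod_{n=0}^\infty (1+\zeta_n)<\infty$ (i.e.\ $\prod_{n=0}^\infty (1+\zeta_n)<K$ a.s.) and $\chi:(0,\infty)\to\mathbb{N}$ is a rate of convergence for $\sum_{n=0}^\infty \mathbb{E}[\xi_n]<\infty$, i.e.\ $\sum_{n=\chi(\varepsilon)}^\infty \mathbb{E}[\xi_n]<\varepsilon$ for all $\varepsilon>0$. (2) $(x_n)$ has the $\liminf$-property in mean w.r.t.\ $F$ with a $\liminf$-bound $\varphi:(0,\infty)\times\mathbb{N}\to (0,\infty)$, i.e.\ $\forall \varepsilon>0\ \forall N\in\mathbb{N}\ \exists n\in [N;\varphi(\varepsilon,N)]\,(\mathbb{E}[F(x_n)]<\varepsilon)$. Lastly,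 let $\tau:(0,\infty)\to (0,\infty)$ be a modulus of $\phi$-regularity for $F$ in mean w.r.t.\ $D$, i.e.\ $\forall \varepsilon>0\ \forall x\in D\,(\mathbb{E}[F(x)]<\tau(\varepsilon)\to \mathbb{E}[\mathrm{dist}^\phi_{\mathrm{zer}F}(x)]<\varepsilon)$, where $D$ is a collection of $X$-valued random variables with $(x_n)\subseteq D$. Then $\mathrm{dist}^\phi_{\mathrm{zer}F}(x_n)\to 0$ in mean and a.s., with rates \[ \forall\varepsilon>0\ \forall n\geq \rho(\varepsilon)\left(\mathbb{E}[\mathrm{dist}^\phi_{\mathrm{zer}F}(x_n)]<\varepsilon\right) \] as well as \[ \forall \lambda,\varepsilon>0\left(\mathbb{P}(\exists n\geq \rho(\lambda\varepsilon) (\mathrm{dist}^\phi_{\mathrm{zer}F}(x_n)\geq\varepsilon))< \lambda\right) \] where $\rho(\varepsilon):=\varphi\left(\tau\left(\varepsilon/3K\right),\chi\left(\varepsilon/3K\right)\right)$. If $\phi$ is uniformly consistent with a modulus $\theta:[0,\infty)\to [0,\infty)$ (i.e.\ $\phi(x,y)<\theta(\varepsilon)\to d(x,y)<\varepsilon$ for all $\varepsilon>0$, $x,y\in X$) which is nondecreasing and convex with $\theta(0)=0$ and $\theta(\varepsilon)>0$ for $\varepsilon>0$, then we further have $\mathrm{dist}_{\mathrm{zer}F}(x_n)\to 0$ in mean and a.s., with rates $\rho(\theta(\varepsilon))$ and $\rho(\lambda\theta(\varepsilon))$ respectively.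
   Context: Throughout, $(\Omega,\mathsf{F},\mathbb{P})$ is a probability space and $(X,d)$ a separable complete metric space with its Borel $\sigma$-algebra. A Carath\'eodory distance is a function $\phi:X\times X\to[0,\infty)$ that is continuous in its left argument and measurable in its right argument. For non-empty $S\subseteq X$, $\mathrm{dist}^\phi_S(x):=\inf_{s\in S}\phi(s,x)$ and $\mathrm{dist}_S=\mathrm{dist}^d_S$. $\ell^1_+(\mathsf{F}_n)$ denotes the set of sequences of nonnegative random variables adapted to $(\mathsf{F}_n)$ that are a.s.\ summable. $[N;M]$ denotes the integer interval from $N$ to $M$. *)

theory Defs
  imports "HOL-Probability.Probability"
begin

definition is_filtration :: "'o measure \<Rightarrow> (nat \<Rightarrow> 'o measure) \<Rightarrow> bool" where
  "is_filtration M Fs \<longleftrightarrow> (\<forall>n. subalgebra M (Fs n)) \<and> (\<forall>n. sets (Fs n) \<subseteq> sets (Fs (Suc n)))"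

definition l1plus :: "'o measure \<Rightarrow> (nat \<Rightarrow> 'o measure) \<Rightarrow> (nat \<Rightarrow> 'o \<Rightarrow> real) \<Rightarrow> bool" where
  "l1plus M Fs z \<longleftrightarrow> (\<forall>n. z n \<in> borel_measurable (Fs n)) \<and>
     (\<forall>n. \<forall>\<omega>\<in>space M. 0 \<le> z n \<omega>) \<and> (AE \<omega> in M. summable (\<lambda>n. z n \<omega>))"

definition caratheodory_distance :: "('a::metric_space \<Rightarrow> 'a \<Rightarrow> real) \<Rightarrow> bool" where
  "caratheodory_distance \<phi> \<longleftrightarrow> (\<forall>x y. 0 \<le> \<phi> x y) \<and>
     (\<forall>y. continuous_on UNIV (\<lambda>x. \<phi> x y)) \<and> (\<forall>x. (\<lambda>y. \<phi> x y) \<in> borel_measurable borel)"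

definition distphi :: "('a \<Rightarrow> 'a \<Rightarrow> real) \<Rightarrow> 'a set \<Rightarrow> 'a \<Rightarrow> real" where
  "distphi \<phi> S x = (INF s\<in>S. \<phi> s x)"

end

theory Submission
  imports Defs
begin


locale fsetup =
  fixes M :: "'o measure" and Fs :: "nat \<Rightarrow> 'o measure" and \<phi> :: "'a::polish_space \<Rightarrow> 'a \<Rightarrow> real"
    and Z :: "'a set" and x :: "nat \<Rightarrow> 'o \<Rightarrow> 'a" and \<zeta> \<xi> :: "nat \<Rightarrow> 'o \<Rightarrow> real"
  assumes M: "prob_space M"
    and filt: "is_filtration M Fs"
    and adapted: "\<And>n. x n \<in> measurable (Fs n) borel"
    and zeta: "l1plus M Fs \<zeta>" and xi: "l1plus M Fs \<xi>"
    and phi: "caratheodory_distance \<phi>"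
    and Zne: "Z \<noteq> {}"
    and fejer: "\<And>n z. z \<in> Z \<Longrightarrow> AE \<omega> in M.
        nn_cond_exp M (Fs n) (\<lambda>\<omega>. ennreal (\<phi> z (x (Suc n) \<omega>))) \<omega>
          \<le> ennreal ((1 + \<zeta> n \<omega>) * \<phi> z (x n \<omega>) + \<xi> n \<omega>)"
begin

lemma subalg: "subalgebra M (Fs n)"
  using filt by (simp add: is_filtration_def)

lemma space_Fs[simp]: "space (Fs n) = space M"
  using subalg[of n] by (simp add: subalgebra_def)

lemma sets_mono: "n \<le> m \<Longrightarrow> sets (Fs n) \<subseteq> sets (Fs m)"
proof (induction m rule: dec_induct)
  case base then show ?case by simp
next
  case (step k) then show ?case using filt unfolding is_filtration_def by blast
qed

lemma subalg2: "n \<le> m \<Longrightarrow> subalgebra (Fs m) (Fs n)"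
  using sets_mono unfolding subalgebra_def by simp

lemma meas_mono: "n \<le> m \<Longrightarrow> f \<in> borel_measurable (Fs n) \<Longrightarrow> f \<in> borel_measurable (Fs m)"
  using measurable_from_subalg[OF subalg2] by blast

lemma meas_M: "f \<in> borel_measurable (Fs n) \<Longrightarrow> f \<in> borel_measurable M"
  using measurable_from_subalg[OF subalg] by blast

lemma sets_M: "A \<in> sets (Fs n) \<Longrightarrow> A \<in> sets M"
  using subalg[of n] by (auto simp: subalgebra_def)

lemma sfs: "sigma_finite_subalgebra M (Fs n)"
proof -
  interpret prob_space M by (rule M)
  have "finite_measure_subalgebra M (Fs n)"
    by unfold_locales (rule subalg)
  then show ?thesis by (rule finite_measure_subalgebra_is_sigma_finite)
qed

definition C :: "'a set" where
  "C = (SOME C. countable C \<and> C \<subseteq> Z \<and> Z \<subseteq> closure C)"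

lemma C_props: "countable C" "C \<subseteq> Z" "Z \<subseteq> closure C"
proof -
  obtain T where "countable T" "T \<subseteq> Z" "Z \<subseteq> closure T" by (rule separable)
  then have "\<exists>C. countable C \<and> C \<subseteq> Z \<and> Z \<subseteq> closure C" by blast
  then have "countable C \<and> C \<subseteq> Z \<and> Z \<subseteq> closure C"
    unfolding C_def by (rule someI_ex)
  then show "countable C" "C \<subseteq> Z" "Z \<subseteq> closure C" by auto
qed

lemma C_ne: "C \<noteq> {}"
  using C_props(3) Zne by auto

lemma phi_nonneg: "0 \<le> \<phi> a b"
  using phi by (simp add: caratheodory_distance_def)

lemma phi_cont: "continuous_on UNIV (\<lambda>a. \<phi> a b)"
  using phi by (simp add: caratheodory_distance_def)

lemma phi_meas: "(\<lambda>b. \<phi> a b) \<in> borel_measurable borel"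
  using phi by (simp add: caratheodory_distance_def)

lemma phi_bdd: "bdd_below ((\<lambda>s. \<phi> s y) ` S)"
  using phi_nonneg by (meson bdd_belowI2)

lemma distphi_C: "distphi \<phi> Z y = (INF c\<in>C. \<phi> c y)"
proof (rule antisym)
  have bddZ: "bdd_below ((\<lambda>s. \<phi> s y) ` Z)" using phi_nonneg by (meson bdd_belowI2)
  show "distphi \<phi> Z y \<le> (INF c\<in>C. \<phi> c y)"
    unfolding distphi_def using C_ne C_props(2) bddZ
    by (intro cINF_greatest) (auto intro: cINF_lower)
  show "(INF c\<in>C. \<phi> c y) \<le> distphi \<phi> Z y"
    unfolding distphi_def
  proof (rule cINF_greatest[OF Zne])
    fix s assume "s \<in> Z"
    then have "s \<in> closure C" using C_props(3) by auto
    then obtain c where c: "\<And>k. c k \<in> C" "c \<longlonglongrightarrow> s" by (auto simp: closure_sequential)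
    have "(\<lambda>k. \<phi> (c k) y) \<longlonglongrightarrow> \<phi> s y"
    proof -
      have "isCont (\<lambda>a. \<phi> a y) s" using phi_cont[of y] by (simp add: continuous_on_eq_continuous_at)
      then show ?thesis by (rule isCont_tendsto_compose) (rule c(2))
    qed
    moreover have "(INF c\<in>C. \<phi> c y) \<le> \<phi> (c k) y" for k
      using c(1) phi_nonneg by (intro cINF_lower phi_bdd)
    ultimately show "(INF c\<in>C. \<phi> c y) \<le> \<phi> s y" using LIMSEQ_le_const by blast
  qed
qed

lemma distphi_nonneg: "0 \<le> distphi \<phi> Z y"
  unfolding distphi_def using Zne phi_nonneg by (intro cINF_greatest) auto

lemma distphi_le: "c \<in> Z \<Longrightarrow> distphi \<phi> Z y \<le> \<phi> c y"
  unfolding distphi_def using phi_nonneg by (intro cINF_lower phi_bdd)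

lemma distphi_meas: "f \<in> measurable N borel \<Longrightarrow> (\<lambda>\<omega>. distphi \<phi> Z (f \<omega>)) \<in> borel_measurable N"
  unfolding distphi_C
  by (intro borel_measurable_cINF_real C_props(1) measurable_compose[OF _ phi_meas])

definition d where "d n \<omega> = distphi \<phi> Z (x n \<omega>)"
definition P where "P n \<omega> = (\<Prod>k<n. 1 + \<zeta> k \<omega>)"
definition Y where "Y n \<omega> = d n \<omega> / P n \<omega>"

lemma d_meas: "d n \<in> borel_measurable (Fs n)"
  unfolding d_def[abs_def] by (rule distphi_meas[OF adapted])

lemma d_nonneg: "0 \<le> d n \<omega>"
  unfolding d_def by (rule distphi_nonneg)

lemma zeta_meas: "\<zeta> n \<in> borel_measurable (Fs n)" and zeta_nonneg: "\<omega> \<in> space M \<Longrightarrow> 0 \<le> \<zeta> n \<omega>"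
  using zeta by (auto simp: l1plus_def)
lemma xi_meas: "\<xi> n \<in> borel_measurable (Fs n)" and xi_nonneg: "\<omega> \<in> space M \<Longrightarrow> 0 \<le> \<xi> n \<omega>"
  using xi by (auto simp: l1plus_def)

lemma P_meas: "n \<le> Suc m \<Longrightarrow> P n \<in> borel_measurable (Fs m)"
  unfolding P_def[abs_def]
  by (intro borel_measurable_prod borel_measurable_add borel_measurable_const meas_mono[OF _ zeta_meas]) auto

lemma P_ge1: "\<omega> \<in> space M \<Longrightarrow> 1 \<le> P n \<omega>"
  unfolding P_def using zeta_nonneg by (intro prod_ge_1) auto

lemma P_Suc: "P (Suc n) \<omega> = P n \<omega> * (1 + \<zeta> n \<omega>)"
  unfolding P_def by simp

lemma Y_meas: "Y n \<in> borel_measurable (Fs n)"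
  unfolding Y_def[abs_def] by (intro borel_measurable_divide d_meas P_meas) auto

lemma Y_nonneg: "\<omega> \<in> space M \<Longrightarrow> 0 \<le> Y n \<omega>"
  unfolding Y_def using d_nonneg P_ge1[of \<omega> n] by auto

end


context fsetup begin

lemma pointwise_inf:
  fixes N :: ennreal
  assumes N: "\<And>c. c \<in> C \<Longrightarrow> N \<le> ennreal ((1 + z) * \<phi> c y + e)" and z: "0 \<le> z" and e: "0 \<le> e"
  shows "N \<le> ennreal ((1 + z) * distphi \<phi> Z y + e)"
proof (rule ennreal_le_epsilon)
  fix \<delta> :: real assume "0 < \<delta>"
  let ?D = "distphi \<phi> Z y"
  have "(INF c\<in>C. \<phi> c y) < ?D + \<delta>/(1+z)" unfolding distphi_C using \<open>0 < \<delta>\<close> z by simp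
  then obtain c where c: "c \<in> C" "\<phi> c y < ?D + \<delta>/(1+z)"
    using cINF_less_iff[OF C_ne phi_bdd] by blast
  have "(1 + z) * \<phi> c y \<le> (1 + z) * (?D + \<delta>/(1+z))"
    using c(2) z by (intro mult_left_mono) auto
  also have "\<dots> = (1+z) * ?D + \<delta>" using z by (simp add: field_simps)
  finally have "(1 + z) * \<phi> c y + e \<le> ((1+z) * ?D + e) + \<delta>" by simp
  then have "ennreal ((1 + z) * \<phi> c y + e) \<le> ennreal (((1+z) * ?D + e) + \<delta>)"
    by (rule ennreal_leI)
  also have "\<dots> = ennreal ((1+z) * ?D + e) + ennreal \<delta>"
    using z e distphi_nonneg[of y] \<open>0 < \<delta>\<close> by (intro ennreal_plus) auto
  finally show "N \<le> ennreal ((1+z) * ?D + e) + ennreal \<delta>" using N[OF c(1)] by (rule order_trans[rotated])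
qed

lemma fejer_d: "AE \<omega> in M. nn_cond_exp M (Fs n) (\<lambda>\<omega>. ennreal (d (Suc n) \<omega>)) \<omega>
    \<le> ennreal ((1 + \<zeta> n \<omega>) * d n \<omega> + \<xi> n \<omega>)"
proof -
  interpret sigma_finite_subalgebra M "Fs n" by (rule sfs)
  have dm: "(\<lambda>\<omega>. ennreal (d (Suc n) \<omega>)) \<in> borel_measurable M"
    using meas_M[OF d_meas] by measurable
  have "AE \<omega> in M. nn_cond_exp M (Fs n) (\<lambda>\<omega>. ennreal (d (Suc n) \<omega>)) \<omega>
      \<le> ennreal ((1 + \<zeta> n \<omega>) * \<phi> c (x n \<omega>) + \<xi> n \<omega>)" if c: "c \<in> C" for c
  proof -
    have cZ: "c \<in> Z" using c C_props(2) by auto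
    have xm: "(\<lambda>\<omega>. ennreal (\<phi> c (x (Suc n) \<omega>))) \<in> borel_measurable M"
      using measurable_compose[OF meas_M[OF adapted] phi_meas] by measurable
    have "AE \<omega> in M. nn_cond_exp M (Fs n) (\<lambda>\<omega>. ennreal (d (Suc n) \<omega>)) \<omega>
        \<le> nn_cond_exp M (Fs n) (\<lambda>\<omega>. ennreal (\<phi> c (x (Suc n) \<omega>))) \<omega>"
      by (rule nn_cond_exp_mono[OF _ dm xm]) (auto simp: d_def intro: ennreal_leI distphi_le[OF cZ])
    then show ?thesis using fejer[OF cZ] by eventually_elim (rule order_trans)
  qed
  then have "AE \<omega> in M. \<forall>c\<in>C. nn_cond_exp M (Fs n) (\<lambda>\<omega>. ennreal (d (Suc n) \<omega>)) \<omega>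
      \<le> ennreal ((1 + \<zeta> n \<omega>) * \<phi> c (x n \<omega>) + \<xi> n \<omega>)"
    using C_props(1) by (subst AE_ball_countable) auto
  then show ?thesis
  proof (rule AE_mp[OF _ AE_I2], intro impI)
    fix \<omega> assume "\<omega> \<in> space M" and h: "\<forall>c\<in>C. nn_cond_exp M (Fs n) (\<lambda>\<omega>. ennreal (d (Suc n) \<omega>)) \<omega>
      \<le> ennreal ((1 + \<zeta> n \<omega>) * \<phi> c (x n \<omega>) + \<xi> n \<omega>)"
    show "nn_cond_exp M (Fs n) (\<lambda>\<omega>. ennreal (d (Suc n) \<omega>)) \<omega>
    \<le> ennreal ((1 + \<zeta> n \<omega>) * d n \<omega> + \<xi> n \<omega>)"
      unfolding d_def[of n]
      by (rule pointwise_inf) (use h zeta_nonneg[OF \<open>\<omega> \<in> space M\<close>] xi_nonneg[OF \<open>\<omega> \<in> space M\<close>] in auto)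
  qed
qed

lemma pw_step:
  fixes P P' D z e i :: real
  assumes "1 \<le> P" "P' = P * (1 + z)" "0 \<le> z" "0 \<le> D" "0 \<le> e" "i = 0 \<or> i = 1"
  shows "i / P' * ((1 + z) * D + e) \<le> i * (D / P) + e"
proof -
  have "P' \<ge> 1" using assms by (metis add_increasing2 mult_le_cancel_left1 mult_nonneg_nonneg
      order.trans zero_le_one linorder_not_less order_less_le)
  have "e / P' \<le> e" using \<open>P' \<ge> 1\<close> assms by (simp add: divide_le_eq mult_le_cancel_left1)
  moreover have "1 / P' * ((1 + z) * D + e) = D / P + e / P'"
  proof -
    have pz: "P > 0" "1 + z > 0" using assms by auto
    have "1 / P' * ((1 + z) * D + e) = (1 + z) * D / P' + e / P'" by (simp add: add_divide_distrib)
    moreover have "(1 + z) * D / P' = D / P" using pz assms(2) by simp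
    ultimately show ?thesis by simp
  qed
  ultimately show ?thesis using assms by auto
qed

lemma step:
  assumes B: "B \<in> sets (Fs n)"
  shows "(\<integral>\<^sup>+ \<omega>. ennreal (Y (Suc n) \<omega>) * indicator B \<omega> \<partial>M)
     \<le> (\<integral>\<^sup>+ \<omega>. ennreal (Y n \<omega>) * indicator B \<omega> \<partial>M) + (\<integral>\<^sup>+ \<omega>. ennreal (\<xi> n \<omega>) \<partial>M)"
proof -
  interpret sigma_finite_subalgebra M "Fs n" by (rule sfs)
  define g where "g \<omega> = ennreal (indicator B \<omega> / P (Suc n) \<omega>)" for \<omega>
  have gm: "g \<in> borel_measurable (Fs n)"
    unfolding g_def using B P_meas[of "Suc n" n] by measurable
  have dm: "(\<lambda>\<omega>. ennreal (d (Suc n) \<omega>)) \<in> borel_measurable M"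
    using meas_M[OF d_meas] by measurable
  have Bs: "B \<subseteq> space M" using sets.sets_into_space[OF B] by simp
  have "(\<integral>\<^sup>+ \<omega>. ennreal (Y (Suc n) \<omega>) * indicator B \<omega> \<partial>M) = (\<integral>\<^sup>+ \<omega>. g \<omega> * ennreal (d (Suc n) \<omega>) \<partial>M)"
  proof (rule nn_integral_cong)
    fix \<omega> assume "\<omega> \<in> space M"
    then show "ennreal (Y (Suc n) \<omega>) * indicator B \<omega> = g \<omega> * ennreal (d (Suc n) \<omega>)"
      unfolding g_def Y_def using P_ge1[of \<omega> "Suc n"] d_nonneg[of "Suc n" \<omega>]
      by (auto simp: indicator_def ennreal_mult'[symmetric])
  qed
  also have "\<dots> = (\<integral>\<^sup>+ \<omega>. g \<omega> * nn_cond_exp M (Fs n) (\<lambda>\<omega>. ennreal (d (Suc n) \<omega>)) \<omega> \<partial>M)"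
    by (rule nn_cond_exp_intg[symmetric, OF gm dm])
  also have "\<dots> \<le> (\<integral>\<^sup>+ \<omega>. g \<omega> * ennreal ((1 + \<zeta> n \<omega>) * d n \<omega> + \<xi> n \<omega>) \<partial>M)"
    using fejer_d[of n] by (intro nn_integral_mono_AE) (auto elim!: eventually_mono intro: mult_left_mono)
  also have "\<dots> \<le> (\<integral>\<^sup>+ \<omega>. ennreal (Y n \<omega>) * indicator B \<omega> + ennreal (\<xi> n \<omega>) \<partial>M)"
  proof (rule nn_integral_mono)
    fix \<omega> assume w: "\<omega> \<in> space M"
    have i01: "indicator B \<omega> = (0::real) \<or> indicator B \<omega> = (1::real)" by (simp add: indicator_def)
    have z: "0 \<le> \<zeta> n \<omega>" "0 \<le> \<xi> n \<omega>" using zeta_nonneg[OF w] xi_nonneg[OF w] by auto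
    have P1: "1 \<le> P n \<omega>" "1 \<le> P (Suc n) \<omega>" using P_ge1[OF w] by auto
    have "g \<omega> * ennreal ((1 + \<zeta> n \<omega>) * d n \<omega> + \<xi> n \<omega>)
        = ennreal (indicator B \<omega> / P (Suc n) \<omega> * ((1 + \<zeta> n \<omega>) * d n \<omega> + \<xi> n \<omega>))"
      unfolding g_def using P1 z d_nonneg[of n \<omega>] by (subst ennreal_mult) auto
    also have "\<dots> \<le> ennreal (indicator B \<omega> * (d n \<omega> / P n \<omega>) + \<xi> n \<omega>)"
      by (rule ennreal_leI, rule pw_step[OF P1(1) P_Suc z(1) d_nonneg z(2) i01])
    also have "\<dots> = ennreal (Y n \<omega>) * indicator B \<omega> + ennreal (\<xi> n \<omega>)"
      unfolding Y_def using P1 d_nonneg[of n \<omega>] z by (auto simp: indicator_def)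
    finally show "g \<omega> * ennreal ((1 + \<zeta> n \<omega>) * d n \<omega> + \<xi> n \<omega>)
        \<le> ennreal (Y n \<omega>) * indicator B \<omega> + ennreal (\<xi> n \<omega>)" .
  qed
  also have "\<dots> = (\<integral>\<^sup>+ \<omega>. ennreal (Y n \<omega>) * indicator B \<omega> \<partial>M) + (\<integral>\<^sup>+ \<omega>. ennreal (\<xi> n \<omega>) \<partial>M)"
  proof -
    have [measurable]: "Y n \<in> borel_measurable M" "\<xi> n \<in> borel_measurable M" "B \<in> sets M"
      using meas_M[OF Y_meas[of n]] meas_M[OF xi_meas[of n]] sets_M[OF B] by auto
    show ?thesis by (intro nn_integral_add) measurable
  qed
  finally show ?thesis .
qed

end


context fsetup begin

lemma mean_bound: "(\<integral>\<^sup>+\<omega>. ennreal (Y (m+j) \<omega>) \<partial>M)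
   \<le> (\<integral>\<^sup>+\<omega>. ennreal (Y m \<omega>) \<partial>M) + (\<Sum>i<j. \<integral>\<^sup>+\<omega>. ennreal (\<xi> (m+i) \<omega>) \<partial>M)"
proof (induction j)
  case 0 show ?case by simp
next
  case (Suc j)
  have sp: "space M \<in> sets (Fs (m+j))" using sets.top[of "Fs (m+j)"] by simp
  have e: "(\<integral>\<^sup>+\<omega>. ennreal (Y k \<omega>) * indicator (space M) \<omega> \<partial>M) = (\<integral>\<^sup>+\<omega>. ennreal (Y k \<omega>) \<partial>M)" for k
    by (rule nn_integral_cong) simp
  have "(\<integral>\<^sup>+\<omega>. ennreal (Y (m + Suc j) \<omega>) \<partial>M)
      \<le> (\<integral>\<^sup>+\<omega>. ennreal (Y (m+j) \<omega>) \<partial>M) + (\<integral>\<^sup>+\<omega>. ennreal (\<xi> (m+j) \<omega>) \<partial>M)"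
    using step[OF sp] by (simp add: e)
  also have "\<dots> \<le> (\<integral>\<^sup>+\<omega>. ennreal (Y m \<omega>) \<partial>M) + (\<Sum>i<j. \<integral>\<^sup>+\<omega>. ennreal (\<xi> (m+i) \<omega>) \<partial>M)
       + (\<integral>\<^sup>+\<omega>. ennreal (\<xi> (m+j) \<omega>) \<partial>M)"
    using Suc.IH by (rule add_right_mono)
  finally show ?case by (simp add: add.assoc)
qed

lemma maximal:
  assumes c: "0 < c"
  shows "ennreal c * emeasure M {\<omega>\<in>space M. \<exists>i. c \<le> Y (m+i) \<omega>}
    \<le> (\<integral>\<^sup>+\<omega>. ennreal (Y m \<omega>) \<partial>M) + (\<Sum>i. \<integral>\<^sup>+\<omega>. ennreal (\<xi> (m+i) \<omega>) \<partial>M)"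
proof -
  define S where "S j = {\<omega>\<in>space M. \<forall>i<j. Y (m+i) \<omega> < c}" for j
  define E where "E j = {\<omega>\<in>space M. \<exists>i<j. c \<le> Y (m+i) \<omega>}" for j
  let ?R = "(\<integral>\<^sup>+\<omega>. ennreal (Y m \<omega>) \<partial>M)"
  let ?X = "\<lambda>i. \<integral>\<^sup>+\<omega>. ennreal (\<xi> (m+i) \<omega>) \<partial>M"
  have S_sets: "S (Suc j) \<in> sets (Fs (m+j))" for j
  proof -
    have "S (Suc j) = (\<Inter>i\<in>{..j}. {\<omega>\<in>space (Fs (m+j)). Y (m+i) \<omega> < c})"
      unfolding S_def by auto
    also have "\<dots> \<in> sets (Fs (m+j))"
    proof (intro sets.finite_INT)
      fix i assume "i \<in> {..j}"
      then have [measurable]: "Y (m+i) \<in> borel_measurable (Fs (m+j))"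
        using meas_mono[OF _ Y_meas] by simp
      show "{\<omega>\<in>space (Fs (m+j)). Y (m+i) \<omega> < c} \<in> sets (Fs (m+j))" by measurable
    qed auto
    finally show ?thesis .
  qed
  have S_M: "S j \<in> sets M" for j
  proof (cases j)
    case 0 then show ?thesis by (simp add: S_def)
  next
    case (Suc k) then show ?thesis using sets_M[OF S_sets[of k]] by simp
  qed
  have E_eq: "E j = space M - S j" for j unfolding E_def S_def by auto
  have E_M: "E j \<in> sets M" for j unfolding E_eq using S_M by auto
  have Ym: "(\<lambda>\<omega>. ennreal (Y k \<omega>)) \<in> borel_measurable M" for k
    using meas_M[OF Y_meas[of k]] by measurable
  have claim: "ennreal c * emeasure M (E j) + (\<integral>\<^sup>+\<omega>. ennreal (Y (m+j) \<omega>) * indicator (S j) \<omega> \<partial>M)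
      \<le> ?R + (\<Sum>i<j. ?X i)" for j
  proof (induction j)
    case 0
    have "E 0 = {}" unfolding E_def by auto
    moreover have "(\<integral>\<^sup>+\<omega>. ennreal (Y m \<omega>) * indicator (S 0) \<omega> \<partial>M) = ?R"
      unfolding S_def by (rule nn_integral_cong) simp
    ultimately show ?case by simp
  next
    case (Suc j)
    define A where "A = S j - S (Suc j)"
    have A_M: "A \<in> sets M" unfolding A_def using S_M by auto
    have EA: "E (Suc j) = E j \<union> A" "E j \<inter> A = {}"
      unfolding A_def E_eq S_def by (auto simp: less_Suc_eq)
    have A_char: "\<omega> \<in> A \<Longrightarrow> c \<le> Y (m+j) \<omega>" for \<omega>
      unfolding A_def S_def by (auto simp: less_Suc_eq)
    have SA: "indicator (S j) \<omega> = (indicator A \<omega> + indicator (S (Suc j)) \<omega> :: ennreal)" for \<omega>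
      unfolding A_def S_def by (auto simp: indicator_def less_Suc_eq)
    have e1: "ennreal c * emeasure M (E (Suc j)) = ennreal c * emeasure M (E j) + ennreal c * emeasure M A"
      unfolding EA(1) using plus_emeasure[OF E_M A_M EA(2)] by (metis distrib_left)
    have e2: "ennreal c * emeasure M A \<le> (\<integral>\<^sup>+\<omega>. ennreal (Y (m+j) \<omega>) * indicator A \<omega> \<partial>M)"
    proof -
      have "ennreal c * emeasure M A = (\<integral>\<^sup>+\<omega>. ennreal c * indicator A \<omega> \<partial>M)"
        using A_M by (simp add: nn_integral_cmult_indicator)
      also have "\<dots> \<le> (\<integral>\<^sup>+\<omega>. ennreal (Y (m+j) \<omega>) * indicator A \<omega> \<partial>M)"
        by (intro nn_integral_mono) (auto simp: indicator_def intro: ennreal_leI A_char)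
      finally show ?thesis .
    qed
    have 1: "ennreal c * emeasure M (E (Suc j))
        \<le> ennreal c * emeasure M (E j) + (\<integral>\<^sup>+\<omega>. ennreal (Y (m+j) \<omega>) * indicator A \<omega> \<partial>M)"
      unfolding e1 by (rule add_left_mono[OF e2])
    have 2: "(\<integral>\<^sup>+\<omega>. ennreal (Y (m + Suc j) \<omega>) * indicator (S (Suc j)) \<omega> \<partial>M)
        \<le> (\<integral>\<^sup>+\<omega>. ennreal (Y (m+j) \<omega>) * indicator (S (Suc j)) \<omega> \<partial>M) + ?X j"
      using step[OF S_sets[of j]] by simp
    have 3: "(\<integral>\<^sup>+\<omega>. ennreal (Y (m+j) \<omega>) * indicator A \<omega> \<partial>M)
        + (\<integral>\<^sup>+\<omega>. ennreal (Y (m+j) \<omega>) * indicator (S (Suc j)) \<omega> \<partial>M)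
        = (\<integral>\<^sup>+\<omega>. ennreal (Y (m+j) \<omega>) * indicator (S j) \<omega> \<partial>M)"
    proof -
      have [measurable]: "A \<in> sets M" "S (Suc j) \<in> sets M" using A_M S_M by auto
      have [measurable]: "(\<lambda>\<omega>. ennreal (Y (m+j) \<omega>)) \<in> borel_measurable M" by (rule Ym)
      have "(\<integral>\<^sup>+\<omega>. ennreal (Y (m+j) \<omega>) * indicator A \<omega> + ennreal (Y (m+j) \<omega>) * indicator (S (Suc j)) \<omega> \<partial>M)
        = (\<integral>\<^sup>+\<omega>. ennreal (Y (m+j) \<omega>) * indicator A \<omega> \<partial>M)
        + (\<integral>\<^sup>+\<omega>. ennreal (Y (m+j) \<omega>) * indicator (S (Suc j)) \<omega> \<partial>M)"
        by (intro nn_integral_add) measurable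
      moreover have "(\<integral>\<^sup>+\<omega>. ennreal (Y (m+j) \<omega>) * indicator A \<omega> + ennreal (Y (m+j) \<omega>) * indicator (S (Suc j)) \<omega> \<partial>M)
         = (\<integral>\<^sup>+\<omega>. ennreal (Y (m+j) \<omega>) * indicator (S j) \<omega> \<partial>M)"
        by (intro nn_integral_cong) (simp add: SA distrib_left)
      ultimately show ?thesis by simp
    qed
    have "ennreal c * emeasure M (E (Suc j)) + (\<integral>\<^sup>+\<omega>. ennreal (Y (m + Suc j) \<omega>) * indicator (S (Suc j)) \<omega> \<partial>M)
      \<le> ennreal c * emeasure M (E j) + (\<integral>\<^sup>+\<omega>. ennreal (Y (m+j) \<omega>) * indicator A \<omega> \<partial>M)
        + ((\<integral>\<^sup>+\<omega>. ennreal (Y (m+j) \<omega>) * indicator (S (Suc j)) \<omega> \<partial>M) + ?X j)"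
      using 1 2 by (rule add_mono)
    also have "\<dots> = ennreal c * emeasure M (E j) + (\<integral>\<^sup>+\<omega>. ennreal (Y (m+j) \<omega>) * indicator (S j) \<omega> \<partial>M) + ?X j"
      using 3 by (simp add: add.assoc)
    also have "\<dots> \<le> ?R + (\<Sum>i<j. ?X i) + ?X j"
      using Suc.IH by (rule add_right_mono)
    finally show ?case by (simp add: add.assoc)
  qed
  have inc: "incseq E" unfolding incseq_def E_def by force
  have UE: "(\<Union>j. E j) = {\<omega>\<in>space M. \<exists>i. c \<le> Y (m+i) \<omega>}" unfolding E_def by auto
  have "ennreal c * emeasure M {\<omega>\<in>space M. \<exists>i. c \<le> Y (m+i) \<omega>} = (SUP j. ennreal c * emeasure M (E j))"
  proof -
    have "emeasure M (\<Union>j. E j) = (SUP j. emeasure M (E j))"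
      using SUP_emeasure_incseq[of E M, OF _ inc] E_M by (metis image_subset_iff)
    then show ?thesis unfolding UE[symmetric] by (simp add: SUP_mult_left_ennreal)
  qed
  also have "\<dots> \<le> ?R + (\<Sum>i. ?X i)"
  proof (rule SUP_least)
    fix j
    have "ennreal c * emeasure M (E j) \<le> ?R + (\<Sum>i<j. ?X i)"
      using claim[of j] by (rule order_trans[rotated]) simp
    also have "\<dots> \<le> ?R + (\<Sum>i. ?X i)"
      by (intro add_left_mono sum_le_suminf) auto
    finally show "ennreal c * emeasure M (E j) \<le> ?R + (\<Sum>i. ?X i)" .
  qed
  finally show ?thesis .
qed

end



lemma ennreal_add_lt: "(A::ennreal) < ennreal a \<Longrightarrow> B < ennreal b \<Longrightarrow> A + B < ennreal (a + b)"
proof (cases A rule: ennreal_cases)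
  case (real r)
  assume A: "A < ennreal a" and B: "B < ennreal b"
  show ?thesis
  proof (cases B rule: ennreal_cases)
    case (real r')
    have "r < a" "r' < b" using A B real \<open>A = ennreal r\<close> \<open>0 \<le> r\<close> by (auto simp: ennreal_less_iff)
    have "A + B = ennreal (r + r')" using real \<open>A = ennreal r\<close> \<open>0 \<le> r\<close> by simp
    show ?thesis unfolding \<open>A + B = ennreal (r + r')\<close>
      by (rule ennreal_lessI) (use \<open>r < a\<close> \<open>r' < b\<close> real \<open>0 \<le> r\<close> in auto)
  qed (use B in auto)
qed auto

lemma suminf_shift_le:
  fixes f :: "nat \<Rightarrow> ennreal"
  assumes "a \<le> b"
  shows "(\<Sum>i. f (i + b)) \<le> (\<Sum>i. f (i + a))"
proof (rule suminf_le_const[OF summableI])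
  fix n
  define k where "k = b - a"
  have "sum (\<lambda>i. f (i + b)) {..<n} = sum (\<lambda>i. f (i + a)) {0+k..<n+k}"
    unfolding sum.shift_bounds_nat_ivl using assms by (simp add: k_def lessThan_atLeast0 algebra_simps)
  also have "\<dots> \<le> (\<Sum>i. f (i + a))" by (intro sum_le_suminf summableI) auto
  finally show "sum (\<lambda>i. f (i + b)) {..<n} \<le> (\<Sum>i. f (i + a))" .
qed

context fsetup begin

lemma rate_core:
  assumes K: "AE \<omega> in M. \<forall>n. P n \<omega> < K" "K > 0"
    and m1: "(\<integral>\<^sup>+\<omega>. ennreal (d m \<omega>) \<partial>M) < ennreal e"
    and m2: "(\<Sum>i. \<integral>\<^sup>+\<omega>. ennreal (\<xi> (m+i) \<omega>) \<partial>M) < ennreal e"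
    and n: "m \<le> n"
  shows "(\<integral>\<^sup>+\<omega>. ennreal (d n \<omega>) \<partial>M) < ennreal (K * (e + e))"
proof -
  have Ym: "(\<lambda>\<omega>. ennreal (Y k \<omega>)) \<in> borel_measurable M" for k
    using meas_M[OF Y_meas[of k]] by measurable
  have Yd: "(\<integral>\<^sup>+\<omega>. ennreal (Y m \<omega>) \<partial>M) \<le> (\<integral>\<^sup>+\<omega>. ennreal (d m \<omega>) \<partial>M)"
  proof (rule nn_integral_mono)
    fix \<omega> assume w: "\<omega> \<in> space M"
    show "ennreal (Y m \<omega>) \<le> ennreal (d m \<omega>)"
      unfolding Y_def using P_ge1[OF w, of m] d_nonneg[of m \<omega>]
      by (intro ennreal_leI) (simp add: divide_le_eq mult_le_cancel_left1 mult_le_cancel_right1)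
  qed
  have "(\<integral>\<^sup>+\<omega>. ennreal (d n \<omega>) \<partial>M) \<le> (\<integral>\<^sup>+\<omega>. ennreal K * ennreal (Y n \<omega>) \<partial>M)"
  proof (rule nn_integral_mono_AE)
    show "AE \<omega> in M. ennreal (d n \<omega>) \<le> ennreal K * ennreal (Y n \<omega>)"
      using K(1) AE_space
    proof eventually_elim
      case (elim \<omega>)
      have P1: "1 \<le> P n \<omega>" using P_ge1[OF elim(2)] .
      have "d n \<omega> = P n \<omega> * Y n \<omega>" unfolding Y_def using P1 by simp
      also have "\<dots> \<le> K * Y n \<omega>"
        using elim(1) Y_nonneg[OF elim(2), of n] by (intro mult_right_mono) (auto simp: less_imp_le)
      finally show ?case using K(2) Y_nonneg[OF elim(2), of n] by (subst ennreal_mult[symmetric]) (auto intro: ennreal_leI)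
    qed
  qed
  also have "\<dots> = ennreal K * (\<integral>\<^sup>+\<omega>. ennreal (Y n \<omega>) \<partial>M)"
    by (rule nn_integral_cmult[OF Ym])
  also have "\<dots> \<le> ennreal K * ((\<integral>\<^sup>+\<omega>. ennreal (Y m \<omega>) \<partial>M) + (\<Sum>i. \<integral>\<^sup>+\<omega>. ennreal (\<xi> (m+i) \<omega>) \<partial>M))"
  proof (rule mult_left_mono)
    have "(\<integral>\<^sup>+\<omega>. ennreal (Y n \<omega>) \<partial>M) = (\<integral>\<^sup>+\<omega>. ennreal (Y (m + (n-m)) \<omega>) \<partial>M)" using n by simp
    also have "\<dots> \<le> (\<integral>\<^sup>+\<omega>. ennreal (Y m \<omega>) \<partial>M) + (\<Sum>i<n-m. \<integral>\<^sup>+\<omega>. ennreal (\<xi> (m+i) \<omega>) \<partial>M)"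
      by (rule mean_bound)
    also have "\<dots> \<le> (\<integral>\<^sup>+\<omega>. ennreal (Y m \<omega>) \<partial>M) + (\<Sum>i. \<integral>\<^sup>+\<omega>. ennreal (\<xi> (m+i) \<omega>) \<partial>M)"
      by (intro add_left_mono sum_le_suminf summableI) auto
    finally show "(\<integral>\<^sup>+\<omega>. ennreal (Y n \<omega>) \<partial>M) \<le> \<dots>" .
  qed simp
  also have "\<dots> < ennreal K * ennreal (e + e)"
    using Yd m1 m2 K(2) by (intro ennreal_mult_strict_left_mono ennreal_add_lt) auto
  also have "\<dots> = ennreal (K * (e + e))"
    by (rule ennreal_mult'[symmetric]) (use K(2) in simp)
  finally show ?thesis .
qed

lemma Y_le_d: "(\<integral>\<^sup>+\<omega>. ennreal (Y m \<omega>) \<partial>M) \<le> (\<integral>\<^sup>+\<omega>. ennreal (d m \<omega>) \<partial>M)"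
proof (rule nn_integral_mono)
  fix \<omega> assume w: "\<omega> \<in> space M"
  show "ennreal (Y m \<omega>) \<le> ennreal (d m \<omega>)"
    unfolding Y_def using P_ge1[OF w, of m] d_nonneg[of m \<omega>]
    by (intro ennreal_leI) (simp add: divide_le_eq mult_le_cancel_left1 mult_le_cancel_right1)
qed

lemma prob_core:
  assumes K: "AE \<omega> in M. \<forall>n. P n \<omega> < K" "K > 0"
    and m1: "(\<integral>\<^sup>+\<omega>. ennreal (d m \<omega>) \<partial>M) < ennreal e"
    and m2: "(\<Sum>i. \<integral>\<^sup>+\<omega>. ennreal (\<xi> (m+i) \<omega>) \<partial>M) < ennreal e"
    and c: "c > 0"
  shows "ennreal (c/K) * emeasure M {\<omega>\<in>space M. \<exists>n\<ge>m. c \<le> d n \<omega>} < ennreal (e + e)"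
proof -
  have [measurable]: "Y i \<in> borel_measurable M" for i using meas_M[OF Y_meas] .
  have [measurable]: "d i \<in> borel_measurable M" for i using meas_M[OF d_meas] .
  let ?S = "{\<omega>\<in>space M. \<exists>i. c/K \<le> Y (m+i) \<omega>}"
  let ?T = "{\<omega>\<in>space M. \<exists>n\<ge>m. c \<le> d n \<omega>}"
  have S_M: "?S \<in> sets M" by measurable
  have "emeasure M ?T \<le> emeasure M ?S"
  proof (rule emeasure_mono_AE[OF _ S_M])
    show "AE \<omega> in M. \<omega> \<in> ?T \<longrightarrow> \<omega> \<in> ?S"
      using K(1)
    proof eventually_elim
      case (elim \<omega>)
      show ?case
      proof
        assume "\<omega> \<in> ?T"
        then obtain n where n: "m \<le> n" "c \<le> d n \<omega>" and w: "\<omega> \<in> space M" by auto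
        have P: "0 < P n \<omega>" "P n \<omega> < K" using P_ge1[OF w, of n] elim by auto
        have "c / K \<le> c / P n \<omega>" using P c by (intro divide_left_mono) auto
        also have "\<dots> \<le> d n \<omega> / P n \<omega>" using P n(2) by (intro divide_right_mono) auto
        finally have "c / K \<le> Y (m + (n - m)) \<omega>" using n(1) by (simp add: Y_def)
        then show "\<omega> \<in> ?S" using w by blast
      qed
    qed
  qed
  then have "ennreal (c/K) * emeasure M ?T \<le> ennreal (c/K) * emeasure M ?S"
    by (rule mult_left_mono) simp
  also have "\<dots> \<le> (\<integral>\<^sup>+\<omega>. ennreal (Y m \<omega>) \<partial>M) + (\<Sum>i. \<integral>\<^sup>+\<omega>. ennreal (\<xi> (m+i) \<omega>) \<partial>M)"
    using c K(2) by (intro maximal) auto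
  also have "\<dots> < ennreal (e + e)"
    using Y_le_d[of m] m1 m2 by (intro ennreal_add_lt) auto
  finally show ?thesis .
qed

end

lemma ennreal_tendsto_0:
  fixes u :: "nat \<Rightarrow> ennreal"
  assumes "\<And>\<epsilon>. \<epsilon> > 0 \<Longrightarrow> \<exists>N. \<forall>n\<ge>N. u n < ennreal \<epsilon>"
  shows "u \<longlonglongrightarrow> 0"
proof (rule order_tendstoI)
  fix a :: ennreal assume "a < 0" then show "\<forall>\<^sub>F n in sequentially. a < u n" by simp
next
  fix a :: ennreal assume a: "0 < a"
  obtain \<epsilon> where \<epsilon>: "\<epsilon> > 0" "ennreal \<epsilon> \<le> a"
  proof (cases a rule: ennreal_cases)
    case (real r) then show ?thesis using a that[of r] by auto
  next
    case top then show ?thesis using that[of 1] by auto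
  qed
  obtain N where "\<forall>n\<ge>N. u n < ennreal \<epsilon>" using assms[OF \<epsilon>(1)] by blast
  then show "\<forall>\<^sub>F n in sequentially. u n < a"
    unfolding eventually_sequentially using \<epsilon>(2) by (auto intro: less_le_trans)
qed




lemma slope_swap: "((a::real) - b) / (c - d) = (b - a) / (d - c)"
  by (metis divide_minus_left divide_minus_right minus_diff_eq minus_divide_divide)

lemma convex_support:
  fixes \<theta> :: "real \<Rightarrow> real"
  assumes cv: "convex_on {0..} \<theta>" and \<theta>0: "\<theta> 0 = 0" and pos: "\<theta> \<epsilon> > 0" "\<epsilon> > 0"
  shows "\<exists>s. s \<ge> \<theta> \<epsilon> / \<epsilon> \<and> (\<forall>e\<ge>0. \<theta> \<epsilon> + s * (e - \<epsilon>) \<le> \<theta> e)"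
proof -
  define SL where "SL = (\<lambda>e'. (\<theta> \<epsilon> - \<theta> e') / (\<epsilon> - e')) ` {0..<\<epsilon>}"
  have key: "(\<theta> \<epsilon> - \<theta> e') / (\<epsilon> - e') \<le> (\<theta> y - \<theta> \<epsilon>) / (y - \<epsilon>)"
    if "0 \<le> e'" "e' < \<epsilon>" "\<epsilon> < y" for e' y
  proof -
    have "(\<theta> e' - \<theta> \<epsilon>) / (e' - \<epsilon>) \<le> (\<theta> \<epsilon> - \<theta> y) / (\<epsilon> - y)"
      using convex_on_slope_le[OF cv, of e' y \<epsilon>] that pos by auto
    then show ?thesis by (simp add: slope_swap[of "\<theta> e'"] slope_swap[of "\<theta> \<epsilon>" "\<theta> y"])
  qed
  have ne: "SL \<noteq> {}" unfolding SL_def using pos by auto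
  have bdd: "bdd_above SL"
    unfolding SL_def using key[of _ "2*\<epsilon>"] pos by (intro bdd_aboveI2[where M="(\<theta> (2*\<epsilon>) - \<theta> \<epsilon>) / (2*\<epsilon> - \<epsilon>)"]) auto
  define s where "s = Sup SL"
  have up: "(\<theta> \<epsilon> - \<theta> e') / (\<epsilon> - e') \<le> s" if "0 \<le> e'" "e' < \<epsilon>" for e'
    unfolding s_def using that by (intro cSup_upper bdd) (auto simp: SL_def)
  have lo: "s \<le> (\<theta> y - \<theta> \<epsilon>) / (y - \<epsilon>)" if "\<epsilon> < y" for y
    unfolding s_def using that key by (intro cSup_least ne) (auto simp: SL_def)
  have "\<theta> \<epsilon> / \<epsilon> \<le> s" using up[of 0] pos \<theta>0 by simp
  moreover have "\<theta> \<epsilon> + s * (e - \<epsilon>) \<le> \<theta> e" if "e \<ge> 0" for e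
  proof (cases e \<epsilon> rule: linorder_cases)
    case less
    then have "(\<theta> \<epsilon> - \<theta> e) / (\<epsilon> - e) \<le> s" using up that by auto
    then have "\<theta> \<epsilon> - \<theta> e \<le> s * (\<epsilon> - e)" using less by (simp add: divide_le_eq mult.commute)
    then show ?thesis by (simp add: algebra_simps)
  next
    case equal then show ?thesis by simp
  next
    case greater
    then have "s \<le> (\<theta> e - \<theta> \<epsilon>) / (e - \<epsilon>)" using lo by auto
    then have "s * (e - \<epsilon>) \<le> \<theta> e - \<theta> \<epsilon>" using greater by (simp add: le_divide_eq)
    then show ?thesis by simp
  qed
  ultimately show ?thesis by blast
qed

lemma infdist_theta:
  fixes \<theta> :: "real \<Rightarrow> real" and \<phi> :: "'a::metric_space \<Rightarrow> 'a \<Rightarrow> real"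
  assumes Zne: "Z \<noteq> {}" and phinn: "\<And>a b. 0 \<le> \<phi> a b"
    and \<theta>0: "\<theta> 0 = 0"
    and cons: "\<forall>\<epsilon>>0. \<forall>a b. \<phi> a b < \<theta> \<epsilon> \<longrightarrow> dist a b < \<epsilon>"
  shows "\<theta> (infdist y Z) \<le> distphi \<phi> Z y"
proof (cases "infdist y Z = 0")
  case True
  have "0 \<le> distphi \<phi> Z y" unfolding distphi_def using Zne phinn by (intro cINF_greatest) auto
  then show ?thesis using True \<theta>0 by simp
next
  case False
  then have tpos: "infdist y Z > 0" using infdist_nonneg[of y Z] by linarith
  show ?thesis
  proof (rule ccontr)
    assume "\<not> ?thesis"
    then have "(INF s\<in>Z. \<phi> s y) < \<theta> (infdist y Z)" unfolding distphi_def by simp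
    moreover have "bdd_below ((\<lambda>s. \<phi> s y) ` Z)" using phinn by (meson bdd_belowI2)
    ultimately obtain s where s: "s \<in> Z" "\<phi> s y < \<theta> (infdist y Z)"
      using cINF_less_iff[OF Zne] by blast
    then have "dist s y < infdist y Z" using cons tpos by blast
    moreover have "infdist y Z \<le> dist y s" using s(1) by (rule infdist_le)
    ultimately show False by (simp add: dist_commute)
  qed
qed


theorem theorem4p11:
  fixes M :: "'o measure" and Fs :: "nat \<Rightarrow> 'o measure"
    and F :: "'a::polish_space \<Rightarrow> ennreal" and \<phi> :: "'a \<Rightarrow> 'a \<Rightarrow> real"
    and x :: "nat \<Rightarrow> 'o \<Rightarrow> 'a" and \<zeta> \<xi> :: "nat \<Rightarrow> 'o \<Rightarrow> real"
    and K :: real and chi :: "real \<Rightarrow> nat" and \<psi> :: "real \<Rightarrow> nat \<Rightarrow> nat"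
    and \<tau> :: "real \<Rightarrow> real" and D :: "('o \<Rightarrow> 'a) set"
    and \<rho> :: "real \<Rightarrow> nat"
  assumes M: "prob_space M"
    and F_meas: "F \<in> borel_measurable borel"
    and zer_closed: "closed {z. F z = 0}"
    and zer_ne: "{z. F z = 0} \<noteq> {}"
    and phi: "caratheodory_distance \<phi>"
    and filt: "is_filtration M Fs"
    and adapted: "\<And>n. x n \<in> measurable (Fs n) borel"
    and zeta: "l1plus M Fs \<zeta>" and xi: "l1plus M Fs \<xi>"
    and fejer: "\<And>n z. F z = 0 \<Longrightarrow> AE \<omega> in M.
        nn_cond_exp M (Fs n) (\<lambda>\<omega>. ennreal (\<phi> z (x (Suc n) \<omega>))) \<omega>
          \<le> ennreal ((1 + \<zeta> n \<omega>) * \<phi> z (x n \<omega>) + \<xi> n \<omega>)"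
    and K_pos: "K > 0"
    and K_bound: "AE \<omega> in M. (\<Prod>n. 1 + \<zeta> n \<omega>) < K"
    and chi: "\<And>\<epsilon>. \<epsilon> > 0 \<Longrightarrow> (\<Sum>n. \<integral>\<^sup>+ \<omega>. ennreal (\<xi> (n + chi \<epsilon>) \<omega>) \<partial>M) < ennreal \<epsilon>"
    and liminf: "\<And>\<epsilon> N. \<epsilon> > 0 \<Longrightarrow>
        \<exists>n. N \<le> n \<and> n \<le> \<psi> \<epsilon> N \<and> (\<integral>\<^sup>+ \<omega>. F (x n \<omega>) \<partial>M) < ennreal \<epsilon>"
    and D_rv: "\<And>y. y \<in> D \<Longrightarrow> y \<in> measurable M borel"
    and x_D: "\<And>n. x n \<in> D"
    and tau_pos: "\<And>\<epsilon>. \<epsilon> > 0 \<Longrightarrow> \<tau> \<epsilon> > 0"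
    and tau: "\<And>\<epsilon> y. \<epsilon> > 0 \<Longrightarrow> y \<in> D \<Longrightarrow>
        (\<integral>\<^sup>+ \<omega>. F (y \<omega>) \<partial>M) < ennreal (\<tau> \<epsilon>) \<Longrightarrow>
        (\<integral>\<^sup>+ \<omega>. ennreal (distphi \<phi> {z. F z = 0} (y \<omega>)) \<partial>M) < ennreal \<epsilon>"
    and rho_def: "\<And>\<epsilon>. \<rho> \<epsilon> = \<psi> (\<tau> (\<epsilon> / (3 * K))) (chi (\<epsilon> / (3 * K)))"
  shows
    "((\<lambda>n. \<integral>\<^sup>+ \<omega>. ennreal (distphi \<phi> {z. F z = 0} (x n \<omega>)) \<partial>M) \<longlonglongrightarrow> 0)
     \<and> (AE \<omega> in M. (\<lambda>n. distphi \<phi> {z. F z = 0} (x n \<omega>)) \<longlonglongrightarrow> 0)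
     \<and> (\<forall>\<epsilon>>0. \<forall>n\<ge>\<rho> \<epsilon>.
          (\<integral>\<^sup>+ \<omega>. ennreal (distphi \<phi> {z. F z = 0} (x n \<omega>)) \<partial>M) < ennreal \<epsilon>)
     \<and> (\<forall>lam>0. \<forall>\<epsilon>>0. measure M {\<omega>\<in>space M. \<exists>n\<ge>\<rho> (lam * \<epsilon>).
          distphi \<phi> {z. F z = 0} (x n \<omega>) \<ge> \<epsilon>} < lam)
     \<and> (\<forall>\<theta> :: real \<Rightarrow> real.
          (mono_on {0..} \<theta> \<and> convex_on {0..} \<theta> \<and> \<theta> 0 = 0 \<and>
           (\<forall>\<epsilon>\<ge>0. \<theta> \<epsilon> \<ge> 0) \<and> (\<forall>\<epsilon>>0. \<theta> \<epsilon> > 0) \<and>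
           (\<forall>\<epsilon>>0. \<forall>a b. \<phi> a b < \<theta> \<epsilon> \<longrightarrow> dist a b < \<epsilon>))
          \<longrightarrow>
          ((\<lambda>n. \<integral>\<^sup>+ \<omega>. ennreal (infdist (x n \<omega>) {z. F z = 0}) \<partial>M) \<longlonglongrightarrow> 0)
          \<and> (AE \<omega> in M. (\<lambda>n. infdist (x n \<omega>) {z. F z = 0}) \<longlonglongrightarrow> 0)
          \<and> (\<forall>\<epsilon>>0. \<forall>n\<ge>\<rho> (\<theta> \<epsilon>).
               (\<integral>\<^sup>+ \<omega>. ennreal (infdist (x n \<omega>) {z. F z = 0}) \<partial>M) < ennreal \<epsilon>)
          \<and> (\<forall>lam>0. \<forall>\<epsilon>>0. measure M {\<omega>\<in>space M. \<exists>n\<ge>\<rho> (lam * \<theta> \<epsilon>).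
               infdist (x n \<omega>) {z. F z = 0} \<ge> \<epsilon>} < lam))"
proof -
  define Z where "Z = {z. F z = 0}"
  have ZZ: "{z. F z = 0} = Z" by (simp add: Z_def)
  have fs: "fsetup M Fs \<phi> Z x \<zeta> \<xi>"
    unfolding fsetup_def Z_def mem_Collect_eq using M filt adapted zeta xi phi zer_ne fejer by blast
  interpret fsetup M Fs \<phi> Z x \<zeta> \<xi> by (rule fs)
  interpret prob_space M by (rule M)
  have dZ: "distphi \<phi> Z (x n \<omega>) = d n \<omega>" for n \<omega> by (simp add: d_def)
  have dM[measurable]: "d n \<in> borel_measurable M" for n using meas_M[OF d_meas] .
  have AEK: "AE \<omega> in M. \<forall>n. P n \<omega> < K"
  proof -
    have "AE \<omega> in M. summable (\<lambda>n. \<zeta> n \<omega>)" using zeta by (simp add: l1plus_def)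
    then show ?thesis using K_bound AE_space
    proof eventually_elim
      case (elim \<omega>)
      have nn: "\<And>k. 0 \<le> \<zeta> k \<omega>" using zeta_nonneg[OF elim(3)] .
      have "summable (\<lambda>k. \<bar>\<zeta> k \<omega>\<bar>)" using elim(1) nn by simp
      then have cp: "convergent_prod (\<lambda>k. 1 + \<zeta> k \<omega>)"
      proof (rule summable_imp_convergent_prod_real)
        fix k show "\<zeta> k \<omega> \<noteq> -1" using nn[of k] by linarith
      qed
      show ?case
      proof
        fix n
        have "P n \<omega> \<le> (\<Prod>k. 1 + \<zeta> k \<omega>)"
          unfolding P_def using nn by (intro prod_le_prodinf[OF convergent_prod_has_prod[OF cp]]) auto
        then show "P n \<omega> < K" using elim(2) by simp
      qed
    qed
  qed
  have core: "\<exists>m. m \<le> \<rho> \<epsilon> \<and> (\<integral>\<^sup>+\<omega>. ennreal (d m \<omega>) \<partial>M) < ennreal (\<epsilon>/(3*K))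
      \<and> (\<Sum>i. \<integral>\<^sup>+\<omega>. ennreal (\<xi> (m+i) \<omega>) \<partial>M) < ennreal (\<epsilon>/(3*K))" if "\<epsilon> > 0" for \<epsilon>
  proof -
    define e where "e = \<epsilon>/(3*K)"
    have e: "e > 0" using that K_pos by (simp add: e_def)
    obtain m where m: "chi e \<le> m" "m \<le> \<psi> (\<tau> e) (chi e)" "(\<integral>\<^sup>+\<omega>. F (x m \<omega>) \<partial>M) < ennreal (\<tau> e)"
      using liminf[OF tau_pos[OF e]] by blast
    have "(\<integral>\<^sup>+\<omega>. ennreal (d m \<omega>) \<partial>M) < ennreal e"
      using tau[OF e x_D m(3)] by (simp add: ZZ dZ)
    moreover have "(\<Sum>i. \<integral>\<^sup>+\<omega>. ennreal (\<xi> (m+i) \<omega>) \<partial>M) < ennreal e"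
    proof -
      have "(\<Sum>i. \<integral>\<^sup>+\<omega>. ennreal (\<xi> (m+i) \<omega>) \<partial>M) = (\<Sum>i. \<integral>\<^sup>+\<omega>. ennreal (\<xi> (i+m) \<omega>) \<partial>M)"
        by (simp add: add.commute)
      also have "\<dots> \<le> (\<Sum>i. \<integral>\<^sup>+\<omega>. ennreal (\<xi> (i + chi e) \<omega>) \<partial>M)"
        by (rule suminf_shift_le[where f="\<lambda>k. \<integral>\<^sup>+\<omega>. ennreal (\<xi> k \<omega>) \<partial>M", OF m(1)])
      also have "\<dots> < ennreal e" using chi[OF e] .
      finally show ?thesis .
    qed
    moreover have "m \<le> \<rho> \<epsilon>" using m(2) by (simp add: rho_def e_def)
    ultimately show ?thesis unfolding e_def by blast
  qed
  have rate: "\<forall>\<epsilon>>0. \<forall>n\<ge>\<rho> \<epsilon>. (\<integral>\<^sup>+\<omega>. ennreal (d n \<omega>) \<partial>M) < ennreal \<epsilon>"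
  proof (intro allI impI)
    fix \<epsilon> :: real and n assume \<epsilon>: "\<epsilon> > 0" and n: "\<rho> \<epsilon> \<le> n"
    obtain m where m: "m \<le> \<rho> \<epsilon>" "(\<integral>\<^sup>+\<omega>. ennreal (d m \<omega>) \<partial>M) < ennreal (\<epsilon>/(3*K))"
      "(\<Sum>i. \<integral>\<^sup>+\<omega>. ennreal (\<xi> (m+i) \<omega>) \<partial>M) < ennreal (\<epsilon>/(3*K))"
      using core[OF \<epsilon>] by blast
    have "(\<integral>\<^sup>+\<omega>. ennreal (d n \<omega>) \<partial>M) < ennreal (K * (\<epsilon>/(3*K) + \<epsilon>/(3*K)))"
      by (rule rate_core[OF AEK K_pos m(2) m(3)]) (use m(1) n in simp)
    also have "\<dots> \<le> ennreal \<epsilon>" using K_pos \<epsilon> by (intro ennreal_leI) (simp add: field_simps)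
    finally show "(\<integral>\<^sup>+\<omega>. ennreal (d n \<omega>) \<partial>M) < ennreal \<epsilon>" .
  qed
  have probrate: "\<forall>lam>0. \<forall>\<epsilon>>0. measure M {\<omega>\<in>space M. \<exists>n\<ge>\<rho> (lam*\<epsilon>). \<epsilon> \<le> d n \<omega>} < lam"
  proof (intro allI impI)
    fix lam \<epsilon> :: real assume lam: "lam > 0" and \<epsilon>: "\<epsilon> > 0"
    obtain m where m: "m \<le> \<rho> (lam*\<epsilon>)" "(\<integral>\<^sup>+\<omega>. ennreal (d m \<omega>) \<partial>M) < ennreal (lam*\<epsilon>/(3*K))"
      "(\<Sum>i. \<integral>\<^sup>+\<omega>. ennreal (\<xi> (m+i) \<omega>) \<partial>M) < ennreal (lam*\<epsilon>/(3*K))"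
      using core[of "lam*\<epsilon>"] lam \<epsilon> by auto
    let ?T = "{\<omega>\<in>space M. \<exists>n\<ge>\<rho> (lam*\<epsilon>). \<epsilon> \<le> d n \<omega>}"
    let ?T' = "{\<omega>\<in>space M. \<exists>n\<ge>m. \<epsilon> \<le> d n \<omega>}"
    have T'_M: "?T' \<in> sets M" by measurable
    have sub: "?T \<subseteq> ?T'" using m(1) by (auto intro: order_trans)
    have 1: "ennreal (\<epsilon>/K) * emeasure M ?T' < ennreal (lam*\<epsilon>/(3*K) + lam*\<epsilon>/(3*K))"
      by (rule prob_core[OF AEK K_pos m(2) m(3) \<epsilon>])
    have "emeasure M ?T' < ennreal lam"
    proof (rule ccontr)
      assume "\<not> ?thesis"
      then have "ennreal lam \<le> emeasure M ?T'" by simp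
      then have "ennreal (\<epsilon>/K) * ennreal lam \<le> ennreal (\<epsilon>/K) * emeasure M ?T'" by (rule mult_left_mono) simp
      moreover have "ennreal (\<epsilon>/K) * ennreal lam = ennreal (\<epsilon>/K * lam)"
        using \<epsilon> K_pos by (intro ennreal_mult'[symmetric]) simp
      moreover have "ennreal (lam*\<epsilon>/(3*K) + lam*\<epsilon>/(3*K)) \<le> ennreal (\<epsilon>/K * lam)"
        using \<epsilon> K_pos lam by (intro ennreal_leI) (simp add: field_simps)
      ultimately show False using 1 by simp
    qed
    then have "measure M ?T' < lam" using emeasure_eq_measure[of ?T'] lam by (simp add: ennreal_less_iff)
    moreover have "measure M ?T \<le> measure M ?T'" by (rule finite_measure_mono[OF sub T'_M])
    ultimately show "measure M ?T < lam" by simp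
  qed
  have Tsets: "{\<omega>\<in>space M. \<exists>n\<ge>N. e \<le> d n \<omega>} \<in> sets M" for N e by measurable
  have ae: "AE \<omega> in M. (\<lambda>n. d n \<omega>) \<longlonglongrightarrow> 0"
  proof -
    have null: "{\<omega>\<in>space M. \<forall>N. \<exists>n\<ge>N. 1/Suc k \<le> d n \<omega>} \<in> null_sets M" for k :: nat
    proof -
      let ?B = "{\<omega>\<in>space M. \<forall>N. \<exists>n\<ge>N. 1/Suc k \<le> d n \<omega>}"
      have BM: "?B \<in> sets M" by measurable
      have "measure M ?B \<le> 0"
      proof (rule field_le_epsilon)
        fix lam :: real assume lam: "0 < lam"
        have "?B \<subseteq> {\<omega>\<in>space M. \<exists>n\<ge>\<rho> (lam * (1/Suc k)). 1/Suc k \<le> d n \<omega>}" by blast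
        then have "measure M ?B \<le> measure M {\<omega>\<in>space M. \<exists>n\<ge>\<rho> (lam * (1/Suc k)). 1/Suc k \<le> d n \<omega>}"
          by (rule finite_measure_mono[OF _ Tsets])
        also have "\<dots> < lam"
        proof -
          have pos: "(0::real) < 1 / real (Suc k)" by simp
          show ?thesis using probrate lam pos by blast
        qed
        finally show "measure M ?B \<le> 0 + lam" by simp
      qed
      then have "measure M ?B = 0" using measure_nonneg[of M ?B] by linarith
      then have "emeasure M ?B = 0" using emeasure_eq_measure[of ?B] by simp
      then show ?thesis using BM by (simp add: null_sets_def)
    qed
    have "AE \<omega> in M. \<forall>k::nat. \<omega> \<notin> {\<omega>\<in>space M. \<forall>N. \<exists>n\<ge>N. 1/Suc k \<le> d n \<omega>}"
      unfolding AE_all_countable by (intro allI AE_not_in null)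
    then show ?thesis using AE_space
    proof eventually_elim
      case (elim \<omega>)
      show ?case
      proof (rule LIMSEQ_I)
        fix r :: real assume "0 < r"
        obtain k where k: "inverse (real (Suc k)) < r" using reals_Archimedean[OF \<open>0 < r\<close>] by blast
        have "\<not> (\<forall>N. \<exists>n\<ge>N. 1/Suc k \<le> d n \<omega>)" using elim by blast
        then obtain N where N: "\<forall>n\<ge>N. d n \<omega> < 1/Suc k" by (meson not_le)
        show "\<exists>no. \<forall>n\<ge>no. norm (d n \<omega> - 0) < r"
        proof (intro exI allI impI)
          fix n assume "N \<le> n"
          then have "d n \<omega> < 1/Suc k" using N by blast
          also have "1/Suc k = inverse (real (Suc k))" by (simp add: divide_inverse)
          finally show "norm (d n \<omega> - 0) < r" using k d_nonneg[of n \<omega>] by simp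
        qed
      qed
    qed
  qed
  have part5: "\<forall>\<theta> :: real \<Rightarrow> real.
          (mono_on {0..} \<theta> \<and> convex_on {0..} \<theta> \<and> \<theta> 0 = 0 \<and>
           (\<forall>\<epsilon>\<ge>0. \<theta> \<epsilon> \<ge> 0) \<and> (\<forall>\<epsilon>>0. \<theta> \<epsilon> > 0) \<and>
           (\<forall>\<epsilon>>0. \<forall>a b. \<phi> a b < \<theta> \<epsilon> \<longrightarrow> dist a b < \<epsilon>))
          \<longrightarrow>
          ((\<lambda>n. \<integral>\<^sup>+ \<omega>. ennreal (infdist (x n \<omega>) Z) \<partial>M) \<longlonglongrightarrow> 0)
          \<and> (AE \<omega> in M. (\<lambda>n. infdist (x n \<omega>) Z) \<longlonglongrightarrow> 0)
          \<and> (\<forall>\<epsilon>>0. \<forall>n\<ge>\<rho> (\<theta> \<epsilon>).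
               (\<integral>\<^sup>+ \<omega>. ennreal (infdist (x n \<omega>) Z) \<partial>M) < ennreal \<epsilon>)
          \<and> (\<forall>lam>0. \<forall>\<epsilon>>0. measure M {\<omega>\<in>space M. \<exists>n\<ge>\<rho> (lam * \<theta> \<epsilon>).
               infdist (x n \<omega>) Z \<ge> \<epsilon>} < lam)"
  proof (intro allI impI)
    fix \<theta> :: "real \<Rightarrow> real"
    assume H: "mono_on {0..} \<theta> \<and> convex_on {0..} \<theta> \<and> \<theta> 0 = 0 \<and>
           (\<forall>\<epsilon>\<ge>0. \<theta> \<epsilon> \<ge> 0) \<and> (\<forall>\<epsilon>>0. \<theta> \<epsilon> > 0) \<and>
           (\<forall>\<epsilon>>0. \<forall>a b. \<phi> a b < \<theta> \<epsilon> \<longrightarrow> dist a b < \<epsilon>)"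
    have mono: "mono_on {0..} \<theta>" using H by blast
    have cv: "convex_on {0..} \<theta>" using H by blast
    have \<theta>0: "\<theta> 0 = 0" using H by blast
    have tpos: "\<And>\<epsilon>. \<epsilon> > 0 \<Longrightarrow> \<theta> \<epsilon> > 0" using H by blast
    have cons: "\<forall>\<epsilon>>0. \<forall>a b. \<phi> a b < \<theta> \<epsilon> \<longrightarrow> dist a b < \<epsilon>" using H by blast
    have tb: "\<theta> (infdist (x n \<omega>) Z) \<le> d n \<omega>" for n \<omega>
      unfolding d_def by (rule infdist_theta[OF Zne phi_nonneg \<theta>0 cons])
    have tmono: "\<theta> e \<le> \<theta> (infdist (x n \<omega>) Z)" if "e \<ge> 0" "e \<le> infdist (x n \<omega>) Z" for e n \<omega>
    proof -
      have e0: "e \<in> {0..}" using that(1) by simp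
      have i0: "infdist (x n \<omega>) Z \<in> {0..}" using infdist_nonneg[of "x n \<omega>" Z] by simp
      show ?thesis by (rule mono_onD[OF mono e0 i0 that(2)])
    qed
    have id_lt: "infdist (x n \<omega>) Z < e" if "d n \<omega> < \<theta> e" "e > 0" for n \<omega> e
    proof (rule ccontr)
      assume "\<not> ?thesis"
      then have "\<theta> e \<le> \<theta> (infdist (x n \<omega>) Z)" using that by (intro tmono) auto
      then show False using tb[of n \<omega>] that by simp
    qed
    have idM[measurable]: "(\<lambda>\<omega>. infdist (x n \<omega>) Z) \<in> borel_measurable M" for n
      by (rule measurable_compose[OF meas_M[OF adapted] borel_measurable_continuous_onI])
         (rule continuous_on_infdist[OF continuous_on_id])
    have irate: "\<forall>\<epsilon>>0. \<forall>n\<ge>\<rho> (\<theta> \<epsilon>). (\<integral>\<^sup>+ \<omega>. ennreal (infdist (x n \<omega>) Z) \<partial>M) < ennreal \<epsilon>"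
    proof (intro allI impI)
      fix \<epsilon> :: real and n assume \<epsilon>: "\<epsilon> > 0" and n: "\<rho> (\<theta> \<epsilon>) \<le> n"
      have te: "\<theta> \<epsilon> > 0" using tpos[OF \<epsilon>] .
      have dn: "(\<integral>\<^sup>+\<omega>. ennreal (d n \<omega>) \<partial>M) < ennreal (\<theta> \<epsilon>)" using rate te n by blast
      obtain s where s: "s \<ge> \<theta> \<epsilon> / \<epsilon>" "\<forall>e\<ge>0. \<theta> \<epsilon> + s * (e - \<epsilon>) \<le> \<theta> e"
        using convex_support[OF cv \<theta>0 te \<epsilon>] by blast
      have spos: "s > 0" using s(1) te \<epsilon> by (meson divide_pos_pos less_le_trans)
      define a where "a = \<epsilon> - \<theta> \<epsilon> / s"
      have a: "a \<ge> 0" using s(1) spos \<epsilon> by (simp add: a_def field_simps)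
      have pw: "infdist (x n \<omega>) Z \<le> a + d n \<omega> / s" for \<omega>
      proof -
        let ?t = "infdist (x n \<omega>) Z"
        have "\<theta> \<epsilon> + s * (?t - \<epsilon>) \<le> \<theta> ?t" using s(2) infdist_nonneg by blast
        also have "\<dots> \<le> d n \<omega>" by (rule tb)
        finally have "\<theta> \<epsilon> + s * (?t - \<epsilon>) \<le> d n \<omega>" .
        then have "s * ?t \<le> d n \<omega> - \<theta> \<epsilon> + s * \<epsilon>" by (simp add: algebra_simps)
        then have "?t \<le> (d n \<omega> - \<theta> \<epsilon> + s * \<epsilon>) / s" using spos by (simp add: le_divide_eq mult.commute)
        also have "\<dots> = a + d n \<omega> / s" using spos by (simp add: a_def field_simps)
        finally show ?thesis .
      qed
      have "(\<integral>\<^sup>+ \<omega>. ennreal (infdist (x n \<omega>) Z) \<partial>M) \<le> (\<integral>\<^sup>+ \<omega>. ennreal a + ennreal (1/s) * ennreal (d n \<omega>) \<partial>M)"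
      proof (rule nn_integral_mono)
        fix \<omega>
        have "ennreal (infdist (x n \<omega>) Z) \<le> ennreal (a + 1/s * d n \<omega>)" using pw[of \<omega>] by (intro ennreal_leI) simp
        also have "\<dots> = ennreal a + ennreal (1/s) * ennreal (d n \<omega>)"
        proof -
          have "ennreal (a + 1/s * d n \<omega>) = ennreal a + ennreal (1/s * d n \<omega>)"
            by (rule ennreal_plus) (use a spos d_nonneg[of n \<omega>] in auto)
          also have "ennreal (1/s * d n \<omega>) = ennreal (1/s) * ennreal (d n \<omega>)"
            by (rule ennreal_mult') (use spos in auto)
          finally show ?thesis .
        qed
        finally show "ennreal (infdist (x n \<omega>) Z) \<le> ennreal a + ennreal (1/s) * ennreal (d n \<omega>)" .
      qed
      also have "\<dots> = ennreal a + ennreal (1/s) * (\<integral>\<^sup>+\<omega>. ennreal (d n \<omega>) \<partial>M)"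
      proof -
        have [measurable]: "(\<lambda>\<omega>. ennreal (d n \<omega>)) \<in> borel_measurable M" by measurable
        have "(\<integral>\<^sup>+\<omega>. ennreal a + ennreal (1/s) * ennreal (d n \<omega>) \<partial>M)
            = (\<integral>\<^sup>+\<omega>. ennreal a \<partial>M) + (\<integral>\<^sup>+\<omega>. ennreal (1/s) * ennreal (d n \<omega>) \<partial>M)"
          by (rule nn_integral_add) measurable
        also have "(\<integral>\<^sup>+\<omega>. ennreal (1/s) * ennreal (d n \<omega>) \<partial>M) = ennreal (1/s) * (\<integral>\<^sup>+\<omega>. ennreal (d n \<omega>) \<partial>M)"
          by (rule nn_integral_cmult) measurable
        also have "(\<integral>\<^sup>+\<omega>. ennreal a \<partial>M) = ennreal a" by (simp add: emeasure_space_1)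
        finally show ?thesis .
      qed
      also have "\<dots> < ennreal a + ennreal (1/s) * ennreal (\<theta> \<epsilon>)"
        unfolding ennreal_add_left_cancel_less using spos dn by (auto intro!: ennreal_mult_strict_left_mono)
      also have "\<dots> = ennreal \<epsilon>"
      proof -
        have "ennreal (1/s) * ennreal (\<theta> \<epsilon>) = ennreal (\<theta> \<epsilon> / s)"
          by (subst ennreal_mult'[symmetric]) (use spos in auto)
        moreover have "ennreal a + ennreal (\<theta> \<epsilon> / s) = ennreal (a + \<theta> \<epsilon> / s)"
          by (rule ennreal_plus[symmetric]) (use a spos te in auto)
        moreover have "a + \<theta> \<epsilon> / s = \<epsilon>" by (simp add: a_def)
        ultimately show ?thesis by simp
      qed
      finally show "(\<integral>\<^sup>+ \<omega>. ennreal (infdist (x n \<omega>) Z) \<partial>M) < ennreal \<epsilon>" .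
    qed
    have iae: "AE \<omega> in M. (\<lambda>n. infdist (x n \<omega>) Z) \<longlonglongrightarrow> 0"
      using ae
    proof eventually_elim
      case (elim \<omega>)
      show ?case
      proof (rule LIMSEQ_I)
        fix r :: real assume r: "0 < r"
        have "\<forall>\<^sub>F n in sequentially. d n \<omega> < \<theta> r" using order_tendstoD(2)[OF elim tpos[OF r]] .
        then obtain N where N: "\<forall>n\<ge>N. d n \<omega> < \<theta> r" by (auto simp: eventually_sequentially)
        show "\<exists>no. \<forall>n\<ge>no. norm (infdist (x n \<omega>) Z - 0) < r"
        proof (intro exI allI impI)
          fix n assume "N \<le> n"
          then have "infdist (x n \<omega>) Z < r" using N id_lt[OF _ r] by blast
          then show "norm (infdist (x n \<omega>) Z - 0) < r" using infdist_nonneg[of "x n \<omega>" Z] by simp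
        qed
      qed
    qed
    have iprob: "\<forall>lam>0. \<forall>\<epsilon>>0. measure M {\<omega>\<in>space M. \<exists>n\<ge>\<rho> (lam * \<theta> \<epsilon>). infdist (x n \<omega>) Z \<ge> \<epsilon>} < lam"
    proof (intro allI impI)
      fix lam \<epsilon> :: real assume lam: "lam > 0" and \<epsilon>: "\<epsilon> > 0"
      have "{\<omega>\<in>space M. \<exists>n\<ge>\<rho> (lam * \<theta> \<epsilon>). infdist (x n \<omega>) Z \<ge> \<epsilon>}
          \<subseteq> {\<omega>\<in>space M. \<exists>n\<ge>\<rho> (lam * \<theta> \<epsilon>). \<theta> \<epsilon> \<le> d n \<omega>}"
      proof
        fix \<omega> assume "\<omega> \<in> {\<omega>\<in>space M. \<exists>n\<ge>\<rho> (lam * \<theta> \<epsilon>). infdist (x n \<omega>) Z \<ge> \<epsilon>}"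
        then obtain n where w: "\<omega> \<in> space M" and n: "n \<ge> \<rho> (lam * \<theta> \<epsilon>)" "\<epsilon> \<le> infdist (x n \<omega>) Z" by blast
        have "\<theta> \<epsilon> \<le> \<theta> (infdist (x n \<omega>) Z)" using \<epsilon> n(2) by (intro tmono) auto
        also have "\<dots> \<le> d n \<omega>" by (rule tb)
        finally show "\<omega> \<in> {\<omega>\<in>space M. \<exists>n\<ge>\<rho> (lam * \<theta> \<epsilon>). \<theta> \<epsilon> \<le> d n \<omega>}" using w n(1) by blast
      qed
      then have "measure M {\<omega>\<in>space M. \<exists>n\<ge>\<rho> (lam * \<theta> \<epsilon>). infdist (x n \<omega>) Z \<ge> \<epsilon>}
          \<le> measure M {\<omega>\<in>space M. \<exists>n\<ge>\<rho> (lam * \<theta> \<epsilon>). \<theta> \<epsilon> \<le> d n \<omega>}"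
        by (rule finite_measure_mono[OF _ Tsets])
      also have "\<dots> < lam" using probrate lam tpos[OF \<epsilon>] by blast
      finally show "measure M {\<omega>\<in>space M. \<exists>n\<ge>\<rho> (lam * \<theta> \<epsilon>). infdist (x n \<omega>) Z \<ge> \<epsilon>} < lam" .
    qed
    have i1: "(\<lambda>n. \<integral>\<^sup>+ \<omega>. ennreal (infdist (x n \<omega>) Z) \<partial>M) \<longlonglongrightarrow> 0"
    proof (rule ennreal_tendsto_0)
      fix \<epsilon> :: real assume "\<epsilon> > 0"
      then show "\<exists>N. \<forall>n\<ge>N. (\<integral>\<^sup>+ \<omega>. ennreal (infdist (x n \<omega>) Z) \<partial>M) < ennreal \<epsilon>"
        using irate by blast
    qed
    show "((\<lambda>n. \<integral>\<^sup>+ \<omega>. ennreal (infdist (x n \<omega>) Z) \<partial>M) \<longlonglongrightarrow> 0)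
          \<and> (AE \<omega> in M. (\<lambda>n. infdist (x n \<omega>) Z) \<longlonglongrightarrow> 0)
          \<and> (\<forall>\<epsilon>>0. \<forall>n\<ge>\<rho> (\<theta> \<epsilon>).
               (\<integral>\<^sup>+ \<omega>. ennreal (infdist (x n \<omega>) Z) \<partial>M) < ennreal \<epsilon>)
          \<and> (\<forall>lam>0. \<forall>\<epsilon>>0. measure M {\<omega>\<in>space M. \<exists>n\<ge>\<rho> (lam * \<theta> \<epsilon>).
               infdist (x n \<omega>) Z \<ge> \<epsilon>} < lam)"
      by (intro conjI) (rule i1 iae irate iprob)+
  qed
  have t1: "(\<lambda>n. \<integral>\<^sup>+ \<omega>. ennreal (d n \<omega>) \<partial>M) \<longlonglongrightarrow> 0"
  proof (rule ennreal_tendsto_0)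
    fix \<epsilon> :: real assume "\<epsilon> > 0"
    then show "\<exists>N. \<forall>n\<ge>N. (\<integral>\<^sup>+ \<omega>. ennreal (d n \<omega>) \<partial>M) < ennreal \<epsilon>"
      using rate by blast
  qed
  show ?thesis
    unfolding ZZ dZ by (intro conjI) (rule t1 ae rate probrate part5)+
qed



end
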